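(* Let $\mathbb{k}$ be an algebraically closed field of characteristic $0$, $r$ a positive integer and $\lambda\in\mathbb{k}^*\setminus\{\pm1\}$. Index rows by $(e,s)$ and columns by $(e',s')$ with $e,e'\in\{0,1\}$, $s,s'\in\{0,\dots,r-1\}$, ordered lexicographically. Then: (1) for every $a\in\mathbb{k}$, the $2r\times2r$ matrix $\big(\lambda^{(-1)^e(2s'+e')}(a+2s'+e')^s\big)$ is invertible; (2) for every $a\in\mathbb{k}$ and $b\in\mathbb{Q}$, the $2r\times2r$ matrix $\big(\lambda^{(-1)^e(b+2s'+e')}(a+2s'+e')^s\big)$ is invertible.
   Context: Convention: $0^0=1$. For $b\in\mathbb{Q}$, $\lambda^b$ denotes a fixed choice of $b$-th power of $\lambda$ (for $b=p/q$ in lowest terms, $\lambda^b=\mu^p$ for a fixed $\mu$ with $\mu^q=\lambda$), and $\lambda^{\pm(b+t)}:=(\lambda^b)^{\pm1}\lambda^{\pm t}$ for integers $t$. *)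

theory Defs
  imports "Jordan_Normal_Form.Matrix" "HOL-Computational_Algebra.Polynomial"
begin

text \<open>Rows indexed by i = e*r + s, columns by j = e'*r + s' (lexicographic order on (e,s)),
  with e, e' in {0,1} and s, s' in {0..r-1}.
  lb is the fixed choice of lambda^b, and the convention
  lambda^(+-(b+t)) = (lambda^b)^(+-1) * lambda^(+-t) is used.\<close>

definition cor_entry :: "'a::field \<Rightarrow> 'a \<Rightarrow> 'a \<Rightarrow> nat \<Rightarrow> nat \<Rightarrow> nat \<Rightarrow> nat \<Rightarrow> 'a" where
  "cor_entry lam lb a e s e' s' =
     (if e = 0 then lb * lam powi int (2*s' + e')
      else inverse lb * lam powi (- int (2*s' + e'))) * (a + of_nat (2*s' + e')) ^ s"

definition cor_mat :: "nat \<Rightarrow> 'a::field \<Rightarrow> 'a \<Rightarrow> 'a \<Rightarrow> 'a mat" where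
  "cor_mat r lam lb a = mat (2*r) (2*r)
     (\<lambda>(i,j). cor_entry lam lb a (i div r) (i mod r) (j div r) (j mod r))"

end

theory Submission
  imports Defs "Jordan_Normal_Form.Determinant"
begin

lemma key_lemma:
  fixes \<mu> :: "'a::field_char_0"
  assumes mu0: "\<mu> \<noteq> 0" and mu1: "\<mu> \<noteq> 1"
  shows "(\<forall>k\<ge>m. coeff P k = 0) \<Longrightarrow> (\<forall>k\<ge>n. coeff Q k = 0) \<Longrightarrow>
    (\<forall>t<m+n. poly P (of_nat t) * \<mu>^t + poly Q (of_nat t) = 0) \<Longrightarrow> P = 0 \<and> Q = 0"
proof (induction n arbitrary: P Q)
  case 0
  have Q: "Q = 0" using 0(2) by (intro poly_eqI) auto
  have roots: "poly P (of_nat t) = 0" if "t < m" for t using 0(3) that Q mu0 by auto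
  show ?case
  proof (rule ccontr)
    assume "\<not> (P = 0 \<and> Q = 0)"
    with Q have P: "P \<noteq> 0" by auto
    have dP: "degree P < m" using 0(1) P by (metis leading_coeff_0_iff not_le)
    have "of_nat ` {..<m} \<subseteq> {x. poly P x = 0}" using roots by auto
    then have "card (of_nat ` {..<m} :: 'a set) \<le> card {x. poly P x = 0}"
      by (intro card_mono poly_roots_finite P)
    moreover have "card (of_nat ` {..<m} :: 'a set) = m"
      by (subst card_image) (auto simp: inj_on_def)
    ultimately show False using card_poly_roots_bound[OF P] dP by linarith
  qed
next
  case (Suc n)
  define P1 where "P1 = smult \<mu> (P \<circ>\<^sub>p [:1,1:]) - P"
  define Q1 where "Q1 = Q \<circ>\<^sub>p [:1,1:] - Q"
  have pP1: "poly P1 x = \<mu> * poly P (x+1) - poly P x" for x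
    by (simp add: P1_def poly_pcompose algebra_simps)
  have pQ1: "poly Q1 x = poly Q (x+1) - poly Q x" for x
    by (simp add: Q1_def poly_pcompose algebra_simps)
  have bP1: "\<forall>k\<ge>m. coeff P1 k = 0"
  proof (cases "P = 0")
    case True then show ?thesis by (simp add: P1_def)
  next
    case False
    then have "degree P < m" using Suc.prems(1) by (metis leading_coeff_0_iff not_le)
    moreover have "degree P1 \<le> degree P" unfolding P1_def
      by (intro degree_diff_le) (auto simp: degree_pcompose)
    ultimately show ?thesis by (auto intro: coeff_eq_0)
  qed
  have bQ1: "\<forall>k\<ge>n. coeff Q1 k = 0"
  proof (cases "Q = 0")
    case True then show ?thesis by (simp add: Q1_def)
  next
    case False
    then have dQ: "degree Q \<le> n" using Suc.prems(2) by (metis leading_coeff_0_iff not_less_eq_eq)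
    have dQ1: "degree Q1 \<le> degree Q" unfolding Q1_def
      by (intro degree_diff_le) (auto simp: degree_pcompose)
    have cQ: "coeff Q1 (degree Q) = 0" unfolding Q1_def
      using lead_coeff_comp[of "[:1,1:]" Q] by (simp add: degree_pcompose)
    show ?thesis
    proof (intro allI impI)
      fix k assume "n \<le> k"
      show "coeff Q1 k = 0"
      proof (cases "k = degree Q")
        case True with cQ show ?thesis by simp
      next
        case False with dQ dQ1 \<open>n\<le>k\<close> show ?thesis by (intro coeff_eq_0) auto
      qed
    qed
  qed
  have vP1: "\<forall>t<m+n. poly P1 (of_nat t) * \<mu>^t + poly Q1 (of_nat t) = 0"
  proof (intro allI impI)
    fix t assume "t < m+n"
    then have e1: "poly P (of_nat (Suc t)) * \<mu>^(Suc t) + poly Q (of_nat (Suc t)) = 0"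
      and e2: "poly P (of_nat t) * \<mu>^t + poly Q (of_nat t) = 0" using Suc.prems(3) by auto
    have "poly P1 (of_nat t) * \<mu>^t + poly Q1 (of_nat t) =
      (poly P (of_nat (Suc t)) * \<mu>^(Suc t) + poly Q (of_nat (Suc t)))
      - (poly P (of_nat t) * \<mu>^t + poly Q (of_nat t))"
      by (simp add: pP1 pQ1 algebra_simps)
    then show "poly P1 (of_nat t) * \<mu>^t + poly Q1 (of_nat t) = 0" using e1 e2 by simp
  qed
  from Suc.IH[OF bP1 bQ1 vP1] have P10: "P1 = 0" and Q10: "Q1 = 0" by auto
  have P0: "P = 0"
  proof (rule ccontr)
    assume "P \<noteq> 0"
    from P10 have "smult \<mu> (P \<circ>\<^sub>p [:1,1:]) = P" by (simp add: P1_def)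
    then have "lead_coeff (smult \<mu> (P \<circ>\<^sub>p [:1,1:])) = lead_coeff P" by simp
    then have "\<mu> * lead_coeff P = lead_coeff P"
      using lead_coeff_comp[of "[:1,1:]" P] mu0 by (simp add: degree_pcompose)
    with mu1 \<open>P \<noteq> 0\<close> show False by simp
  qed
  have Qc: "poly Q (of_nat t) = poly Q 0" for t
  proof (induction t)
    case (Suc t)
    have "poly Q1 (of_nat t) = 0" using Q10 by simp
    then show ?case using Suc by (simp add: pQ1 add.commute)
  qed simp
  have Q00: "poly Q 0 = 0" using Suc.prems(3) P0 by (metis add_gr_0 mult_zero_left of_nat_0 poly_0 zero_less_Suc add.left_neutral)
  have "Q = 0"
  proof (rule ccontr)
    assume "Q \<noteq> 0"
    then have "finite {x. poly Q x = 0}" by (rule poly_roots_finite)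
    moreover have "range (of_nat :: nat \<Rightarrow> 'a) \<subseteq> {x. poly Q x = 0}" using Qc Q00 by auto
    moreover have "infinite (range (of_nat :: nat \<Rightarrow> 'a))"
      by (intro range_inj_infinite) (simp add: inj_on_def)
    ultimately show False using finite_subset by blast
  qed
  with P0 show ?case by simp
qed

lemma sum_split_add: "(\<Sum>i<m+(n::nat). f i) = (\<Sum>i<m. f i) + (\<Sum>i<n. f (m+i))"
  by (induction n) (auto simp: add.assoc)


lemma bound_comp:
  fixes R :: "'a::field_char_0 poly"
  assumes "\<forall>k\<ge>r. coeff R k = 0" shows "\<forall>k\<ge>r. coeff (R \<circ>\<^sub>p [:a,1:]) k = 0"
proof (cases "R = 0")
  case True thus ?thesis by simp
next
  case False
  then have "degree R < r" using assms by (metis leading_coeff_0_iff not_le)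
  moreover have "degree (R \<circ>\<^sub>p [:a,1:]) = degree R" by (simp add: degree_pcompose)
  ultimately show ?thesis by (auto intro: coeff_eq_0)
qed

lemma main_inv:
  fixes lam lb a :: "'a::field_char_0"
  assumes l0: "lam \<noteq> 0" and l1: "lam \<noteq> 1" and l2: "lam \<noteq> -1" and lb0: "lb \<noteq> 0"
  shows "invertible_mat (cor_mat r lam lb a)"
proof -
  let ?M = "cor_mat r lam lb a"
  have M: "?M \<in> carrier_mat (2*r) (2*r)" by (simp add: cor_mat_def)
  have "det (transpose_mat ?M) \<noteq> 0"
  proof
    assume "det (transpose_mat ?M) = 0"
    then obtain v where v: "v \<in> carrier_vec (2*r)" "v \<noteq> 0\<^sub>v (2*r)"
      "transpose_mat ?M *\<^sub>v v = 0\<^sub>v (2*r)"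
      using det_0_iff_vec_prod_zero[of "transpose_mat ?M" "2*r"] M by auto
    define P where "P = (\<Sum>s<r. monom (v$s) s)"
    define Q where "Q = (\<Sum>s<r. monom (v$(r+s)) s)"
    have cP: "coeff P k = (if k < r then v$k else 0)" for k
      by (simp add: P_def coeff_sum coeff_monom)
    have cQ: "coeff Q k = (if k < r then v$(r+k) else 0)" for k
      by (simp add: Q_def coeff_sum coeff_monom)
    have pP: "poly P x = (\<Sum>s<r. v$s * x^s)" for x
      by (simp add: P_def poly_sum poly_monom)
    have pQ: "poly Q x = (\<Sum>s<r. v$(r+s) * x^s)" for x
      by (simp add: Q_def poly_sum poly_monom)
    have eq: "lb * lam^t * poly P (a + of_nat t) + inverse lb * inverse (lam^t) * poly Q (a + of_nat t) = 0"
      if t: "t < 2*r" for t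
    proof -
      define j where "j = (t mod 2) * r + t div 2"
      have r0: "r > 0" using t by auto
      have td: "t div 2 < r" using t by auto
      have j: "j < 2*r" "j div r = t mod 2" "j mod r = t div 2"
        using td r0 unfolding j_def by (cases "t mod 2 = 0"; auto)+
      have tt: "2 * int (t div 2) + int (t mod 2) = int t"
        by (metis (mono_tags) div_mult_mod_eq mult.commute of_nat_add of_nat_mult of_nat_numeral)
      have tt3: "- (2 * int (t div 2)) - int (t mod 2) = - int t" using tt by linarith
      have tt2: "(2::'a) * of_nat (t div 2) + of_nat (t mod 2) = of_nat t"
        by (metis (mono_tags) div_mult_mod_eq mult.commute of_nat_add of_nat_mult of_nat_numeral)
      have "(transpose_mat ?M *\<^sub>v v) $ j = 0" using v(3) j by simp
      then have "(\<Sum>i<2*r. ?M $$ (i,j) * v$i) = 0"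
        using v(1) j by (simp add: mult_mat_vec_def scalar_prod_def cor_mat_def lessThan_atLeast0 mult.commute)
      then have "(\<Sum>i<r. ?M $$ (i,j) * v$i) + (\<Sum>s<r. ?M $$ (r+s,j) * v$(r+s)) = 0"
        using sum_split_add[of "\<lambda>i. ?M $$ (i,j) * v$i" r r] by (simp add: mult_2)
      moreover have "(\<Sum>i<r. ?M $$ (i,j) * v$i) = lb * lam^t * poly P (a + of_nat t)"
        using j tt tt2 r0 by (simp add: pP cor_mat_def cor_entry_def sum_distrib_left mult_ac)
      moreover have "(\<Sum>s<r. ?M $$ (r+s,j) * v$(r+s)) = inverse lb * inverse (lam^t) * poly Q (a + of_nat t)"
        using j tt tt2 tt3 r0 by (simp add: pQ cor_mat_def cor_entry_def sum_distrib_left mult_ac power_int_minus)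
      ultimately show ?thesis by simp
    qed
    define mu where "mu = lam^2"
    have mu0: "mu \<noteq> 0" using l0 by (simp add: mu_def)
    have mu1: "mu \<noteq> 1" using l1 l2 by (simp add: mu_def power2_eq_1_iff)
    define P' where "P' = smult (lb^2) (P \<circ>\<^sub>p [:a,1:])"
    define Q' where "Q' = Q \<circ>\<^sub>p [:a,1:]"
    have pP': "poly P' x = lb^2 * poly P (a + x)" for x by (simp add: P'_def poly_pcompose)
    have pQ': "poly Q' x = poly Q (a + x)" for x by (simp add: Q'_def poly_pcompose)
    have bP: "\<forall>k\<ge>r. coeff P k = 0" by (simp add: cP)
    have bQ: "\<forall>k\<ge>r. coeff Q k = 0" by (simp add: cQ)
    have bP': "\<forall>k\<ge>r. coeff P' k = 0" using bound_comp[OF bP, of a] by (simp add: P'_def)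
    have bQ': "\<forall>k\<ge>r. coeff Q' k = 0" using bound_comp[OF bQ, of a] by (simp add: Q'_def)
    have vv: "\<forall>t<r+r. poly P' (of_nat t) * mu^t + poly Q' (of_nat t) = 0"
    proof (intro allI impI)
      fix t assume "t < r+r"
      then have e: "lb * lam^t * poly P (a + of_nat t) + inverse lb * inverse (lam^t) * poly Q (a + of_nat t) = 0"
        using eq by (simp add: mult_2)
      have lt: "lam^t \<noteq> 0" using l0 by simp
      have mt: "mu^t = (lam^t)^2" by (simp add: mu_def power_mult[symmetric] mult.commute)
      have "poly P' (of_nat t) * mu^t + poly Q' (of_nat t) = (lb * lam^t) *
         (lb * lam^t * poly P (a + of_nat t) + inverse lb * inverse (lam^t) * poly Q (a + of_nat t))"
        using lb0 lt by (simp add: pP' pQ' mt field_simps power2_eq_square)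
      then show "poly P' (of_nat t) * mu^t + poly Q' (of_nat t) = 0" using e by simp
    qed
    from key_lemma[OF mu0 mu1 bP' bQ' vv] have "P' = 0" "Q' = 0" by auto
    then have P0: "P = 0" and Q0: "Q = 0" using lb0
      by (auto simp: P'_def Q'_def pcompose_eq_0_iff)
    have "v = 0\<^sub>v (2*r)"
    proof (rule eq_vecI)
      fix i assume "i < dim_vec (0\<^sub>v (2*r) :: 'a vec)"
      then have i: "i < 2*r" by simp
      show "v $ i = 0\<^sub>v (2*r) $ i"
      proof (cases "i < r")
        case True
        then show ?thesis using cP[of i] P0 i by simp
      next
        case False
        then have "i - r < r" "r + (i - r) = i" using i by auto
        then show ?thesis using cQ[of "i - r"] Q0 i by simp
      qed
    qed (use v(1) in simp)
    with v(2) show False by simp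
  qed
  then have "det ?M \<noteq> 0" using det_transpose[OF M] by simp
  from det_non_zero_imp_unit[OF M this] obtain B where
    B: "B \<in> carrier_mat (2*r) (2*r)" "B * ?M = 1\<^sub>m (2*r)" "?M * B = 1\<^sub>m (2*r)"
    unfolding Units_def ring_mat_def by auto
  show ?thesis unfolding invertible_mat_def inverts_mat_def using M B by auto
qed

theorem corollary2p14:
  fixes lam :: "'a::{alg_closed_field, field_char_0}" and r :: nat
  assumes "r > 0" and "lam \<noteq> 0" and "lam \<noteq> 1" and "lam \<noteq> -1"
  shows "(\<forall>a::'a. invertible_mat (cor_mat r lam 1 a))
       \<and> (\<forall>(a::'a) (b::rat) (mu::'a).
            mu ^ nat (snd (quotient_of b)) = lam
            \<longrightarrow> invertible_mat (cor_mat r lam (mu powi fst (quotient_of b)) a))"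
proof (intro conjI allI impI)
  fix a :: 'a
  show "invertible_mat (cor_mat r lam 1 a)" using main_inv[of lam 1 r a] assms by simp
next
  fix a :: 'a and b :: rat and mu :: 'a
  assume h: "mu ^ nat (snd (quotient_of b)) = lam"
  have "mu \<noteq> 0"
  proof
    assume "mu = 0"
    with h assms(2,3) show False by (cases "nat (snd (quotient_of b)) = 0") auto
  qed
  then have "mu powi fst (quotient_of b) \<noteq> 0" by simp
  then show "invertible_mat (cor_mat r lam (mu powi fst (quotient_of b)) a)"
    using main_inv[of lam "mu powi fst (quotient_of b)" r a] assms by simp
qed

end
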